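(* Let $A\in\mathcal S_n^+$ with $\operatorname{rk}(A)=\operatorname{st}_+(A)=r$, and suppose $A=BCB^T$ where $B\in\mathbb R_+^{n\times r}$, $C\in\mathbb R_+^{r\times r}$ is symmetric, and at least one of $B$, $C$ is entrywise positive. Then $A\notin\partial\mathcal E_n$.
   Context: $\mathcal S_n^+$ is the set of $n\times n$ symmetric entrywise nonnegative real matrices; $\mathbb R_+^{p\times q}$ the entrywise nonnegative $p\times q$ real matrices. The SNT-rank $\operatorname{st}_+(A)$ of $A\in\mathcal S_n^+$ is the minimal $k$ such that $A=BCB^T$ with $B\in\mathbb R_+^{n\times k}$ and $C\in\mathcal S_k^+$. $\mathcal E_n=\{A\in\mathcal S_n^+:\operatorname{rk}(A)=\operatorname{st}_+(A)\}$. $\partial\mathcal E_n$ is the set of $A\in\mathcal E_n$ such that $A-\alpha uu^T\notin\mathcal E_n$ for every $\alpha>0$, where $u$ is the Perron eigenvector of $A$ (an entrywise nonnegative unit eigenvector for the spectral radius of $A$). *)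

theory Defs
  imports "Jordan_Normal_Form.Spectral_Radius" "Jordan_Normal_Form.DL_Rank"
begin

definition nonneg_mat :: "real mat \<Rightarrow> bool" where
  "nonneg_mat B \<longleftrightarrow> (\<forall>i < dim_row B. \<forall>j < dim_col B. B $$ (i,j) \<ge> 0)"

definition pos_mat :: "real mat \<Rightarrow> bool" where
  "pos_mat B \<longleftrightarrow> (\<forall>i < dim_row B. \<forall>j < dim_col B. B $$ (i,j) > 0)"

definition SNN :: "nat \<Rightarrow> real mat set" where
  "SNN n = {A. A \<in> carrier_mat n n \<and> transpose_mat A = A \<and> nonneg_mat A}"

definition mat_rank :: "real mat \<Rightarrow> nat" where
  "mat_rank A = vec_space.rank (dim_row A) A"

definition snt_fact :: "real mat \<Rightarrow> nat \<Rightarrow> bool" where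
  "snt_fact A k \<longleftrightarrow> (\<exists>B C. B \<in> carrier_mat (dim_row A) k \<and> nonneg_mat B \<and>
       C \<in> SNN k \<and> A = B * C * transpose_mat B)"

definition st_plus :: "real mat \<Rightarrow> nat" where
  "st_plus A = (LEAST k. snt_fact A k)"

definition E_set :: "nat \<Rightarrow> real mat set" where
  "E_set n = {A \<in> SNN n. mat_rank A = st_plus A}"

definition rho :: "real mat \<Rightarrow> real" where
  "rho A = spectral_radius (map_mat complex_of_real A)"

definition perron_vec :: "real mat \<Rightarrow> real vec \<Rightarrow> bool" where
  "perron_vec A u \<longleftrightarrow> u \<in> carrier_vec (dim_row A) \<and> (\<forall>i < dim_vec u. u $ i \<ge> 0) \<and>
      u \<bullet> u = 1 \<and> A *\<^sub>v u = rho A \<cdot>\<^sub>v u"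

definition outer :: "real vec \<Rightarrow> real mat" where
  "outer u = mat (dim_vec u) (dim_vec u) (\<lambda>(i,j). u $ i * u $ j)"

definition bdry_E :: "nat \<Rightarrow> real mat set" where
  "bdry_E n = {A \<in> E_set n. \<exists>u. perron_vec A u \<and>
                  (\<forall>\<alpha>::real. \<alpha> > 0 \<longrightarrow> A - \<alpha> \<cdot>\<^sub>m outer u \<notin> E_set n)}"

end

theory Submission
  imports Defs
begin

lemma rank_mult_le:
  fixes X Y :: "'a::field mat"
  assumes X: "X \<in> carrier_mat n m" and Y: "Y \<in> carrier_mat m p"
  shows "vec_space.rank n (X * Y) \<le> vec_space.rank n X"
proof -
  interpret vec_space "TYPE('a)" n .
  have XY: "X * Y \<in> carrier_mat n p" using X Y by auto
  obtain S where S: "maximal S (\<lambda>T. T \<subseteq> set (cols (X*Y)) \<and> lin_indpt T)"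
    using maximal_exists[of "(\<lambda>T. T \<subseteq> set (cols (X*Y)) \<and> lin_indpt T)" "card (set (cols (X*Y)))" "{}"]
    by (meson List.finite_set card_mono empty_iff empty_subsetI finite_lin_indpt2 rev_finite_subset)
  have rk: "rank (X*Y) = card S" using rank_card_indpt[OF XY S] .
  have Ssub: "S \<subseteq> set (cols (X*Y))" and li: "lin_indpt S" using S unfolding maximal_def by auto
  have colsX: "set (cols X) \<subseteq> carrier_vec n" using X cols_dim by blast
  define W where "W = span (set (cols X))"
  have sub: "subspace class_ring W V" unfolding W_def using span_is_subspace[OF colsX] by simp
  have SW: "S \<subseteq> W"
  proof
    fix v assume "v \<in> S"
    then have "v \<in> set (cols (X*Y))" using Ssub by auto
    then obtain j where j: "j < p" "v = col (X*Y) j" using XY by (auto simp: cols_def)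
    have "v = X *\<^sub>v col Y j" using j X Y by auto
    moreover have "col Y j \<in> carrier_vec m" using Y j by auto
    ultimately have "v \<in> col_space X" using X by (auto simp: col_space_eq)
    then show "v \<in> W" unfolding W_def col_space_def .
  qed
  interpret W: vectorspace class_ring "vs W"
    using sub subspace_is_vs by auto
  have fd: "W.fin_dim" unfolding W_def by (rule fin_dim_span, auto simp: colsX)
  have li2: "W.lin_indpt S"
    using span_li_not_depend(2)[OF SW] sub li by (auto simp: subspace_def)
  have "card S \<le> W.dim"
    using W.li_le_dim(2)[OF fd _ li2] SW by auto
  then show ?thesis using rk unfolding rank_def W_def by simp
qed


lemma pow_mat_add:
  assumes A: "(A :: 'a::semiring_1 mat) \<in> carrier_mat n n"
  shows "A ^\<^sub>m (a + b) = A ^\<^sub>m a * A ^\<^sub>m b"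
proof (induct b)
  case 0 then show ?case using A by simp
next
  case (Suc b)
  have "A ^\<^sub>m (a + Suc b) = (A ^\<^sub>m a * A ^\<^sub>m b) * A" using Suc by simp
  also have "\<dots> = A ^\<^sub>m a * (A ^\<^sub>m b * A)"
    using A by (intro assoc_mult_mat) auto
  finally show ?case by simp
qed

lemma pow_mat_transpose_sym:
  assumes A: "(A :: 'a::comm_semiring_1 mat) \<in> carrier_mat n n" and s: "transpose_mat A = A"
  shows "transpose_mat (A ^\<^sub>m k) = A ^\<^sub>m k"
proof (induct k)
  case 0 then show ?case using A by simp
next
  case (Suc k)
  have "transpose_mat (A ^\<^sub>m Suc k) = transpose_mat A * transpose_mat (A ^\<^sub>m k)"
    using A by (simp add: transpose_mult[of "A ^\<^sub>m k" n n A n])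
  also have "\<dots> = A ^\<^sub>m 1 * A ^\<^sub>m k" using s Suc A by simp
  also have "\<dots> = A ^\<^sub>m (1 + k)" using pow_mat_add[OF A, of 1 k] by simp
  also have "\<dots> = A ^\<^sub>m (Suc k)" by simp
  finally show ?case .
qed

lemma sym_square_zero:
  assumes A: "(A :: real mat) \<in> carrier_mat n n" and s: "transpose_mat A = A"
    and z: "A * A = 0\<^sub>m n n"
  shows "A = 0\<^sub>m n n"
proof (rule eq_matI)
  fix i j assume i: "i < dim_row (0\<^sub>m n n)" and j: "j < dim_col (0\<^sub>m n n)"
  have "(A * A) $$ (j,j) = 0" using z j by simp
  moreover have "(A * A) $$ (j,j) = (\<Sum>k<n. (A $$ (k,j))^2)"
  proof -
    have "(A * A) $$ (j,j) = (\<Sum>k<n. A $$ (j,k) * A $$ (k,j))"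
      using A j by (simp add: scalar_prod_def lessThan_atLeast0)
    also have "\<dots> = (\<Sum>k<n. (A $$ (k,j))^2)"
    proof (rule sum.cong[OF refl])
      fix k assume "k \<in> {..<n}"
      then have "A $$ (j,k) = A $$ (k,j)" using s A j
        by (metis carrier_matD index_transpose_mat(1) lessThan_iff zero_carrier_mat carrier_matD(2))
      then show "A $$ (j,k) * A $$ (k,j) = (A $$ (k,j))^2" by (simp add: power2_eq_square)
    qed
    finally show ?thesis .
  qed
  ultimately have "(\<Sum>k<n. (A $$ (k,j))^2) = 0" by simp
  then have "\<forall>k\<in>{..<n}. (A $$ (k,j))^2 = 0"
    by (subst sum_nonneg_eq_0_iff[symmetric]) auto
  then show "A $$ (i,j) = 0\<^sub>m n n $$ (i,j)" using i j by auto
qed (use A in auto)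

lemma sym_nilpotent_zero:
  assumes A: "(A :: real mat) \<in> carrier_mat n n" and s: "transpose_mat A = A"
  shows "k > 0 \<Longrightarrow> A ^\<^sub>m k = 0\<^sub>m n n \<Longrightarrow> A = 0\<^sub>m n n"
proof (induct k rule: less_induct)
  case (less k)
  show ?case
  proof (cases "k = 1")
    case True then show ?thesis using less A by simp
  next
    case False
    define m where "m = (k + 1) div 2"
    have m: "m < k" "m > 0" "k \<le> 2 * m" using False less(2) unfolding m_def by auto
    have "A ^\<^sub>m (2*m) = A ^\<^sub>m (2*m - k) * A ^\<^sub>m k" using pow_mat_add[OF A, of "2*m-k" k] m by simp
    also have "\<dots> = 0\<^sub>m n n" using less(3) A by simp
    finally have "A ^\<^sub>m m * A ^\<^sub>m m = 0\<^sub>m n n" using pow_mat_add[OF A, of m m] by (simp add: mult_2)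
    then have "A ^\<^sub>m m = 0\<^sub>m n n"
      using sym_square_zero[of "A ^\<^sub>m m" n] A pow_mat_transpose_sym[OF A s] by auto
    then show ?thesis using less(1)[OF m(1) m(2)] by auto
  qed
qed


lemma rho_pos:
  assumes A: "A \<in> carrier_mat n n" and s: "transpose_mat A = A" and nz: "A \<noteq> 0\<^sub>m n n"
  shows "rho A > 0"
proof -
  have n: "n > 0"
  proof (rule ccontr)
    assume "\<not> n > 0"
    then have "n = 0" by simp
    then have "A = 0\<^sub>m n n" using A by (intro eq_matI) auto
    then show False using nz by simp
  qed
  define cA where "cA = map_mat complex_of_real A"
  have cA: "cA \<in> carrier_mat n n" using A unfolding cA_def by auto
  have rdef: "rho A = spectral_radius cA" unfolding rho_def cA_def ..
  have ge: "rho A \<ge> 0" using spectral_radius_mem_max(1)[OF cA n] unfolding rdef by auto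
  show ?thesis
  proof (rule ccontr)
    assume "\<not> rho A > 0"
    then have r0: "spectral_radius cA \<le> 0" unfolding rdef by simp
    from char_poly_factorized[OF cA] obtain as where
      cp: "char_poly cA = (\<Prod>a\<leftarrow>as. [:- a, 1:])" by auto
    from jordan_nf_exists[OF cA cp] obtain n_as where jnf: "jordan_nf cA n_as" by auto
    from jordan_nf_powE[OF cA jnf] obtain P Q where PQ: "P \<in> carrier_mat n n" "Q \<in> carrier_mat n n"
      and cp2: "char_poly cA = (\<Prod>(na, a)\<leftarrow>n_as. [:- a, 1:] ^ na)"
      and pw: "\<And>k. cA ^\<^sub>m k = P * (jordan_matrix n_as) ^\<^sub>m k * Q" by blast
    define J where "J = jordan_matrix n_as"
    from jnf have sim: "similar_mat cA J" and nz0: "0 \<notin> fst ` set n_as"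
      unfolding jordan_nf_def J_def by auto
    from similar_matD[OF sim] obtain n' P' Q' where "{cA, J, P', Q'} \<subseteq> carrier_mat n' n'" by blast
    then have J: "J \<in> carrier_mat n n" using cA by auto
    have sumn: "sum_list (map fst n_as) = n" using J jordan_matrix_carrier[of n_as] unfolding J_def
      by auto
    have a0: "a = 0" if mem: "(m,a) \<in> set n_as" for m a
    proof -
      have "m \<noteq> 0" using nz0 mem by force
      have "poly (char_poly cA) a = (\<Prod>x\<leftarrow>n_as. poly (case x of (na, a) \<Rightarrow> [:- a, 1:] ^ na) a)"
        unfolding cp2 by (induct n_as, auto)
      also have "\<dots> = 0" using mem \<open>m \<noteq> 0\<close>
        by (subst prod_list_zero_iff) (force)
      finally have "a \<in> spectrum cA" using spectrum_root_char_poly[OF cA] by auto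
      then have "norm a \<le> spectral_radius cA" using spectral_radius_mem_max(2)[OF cA n] by auto
      then show ?thesis using r0 by (metis norm_le_zero_iff order_trans)
    qed
    have blk: "jordan_block m a ^\<^sub>m n = 0\<^sub>m m m" if mem: "(m,a) \<in> set n_as" for m a
    proof -
      have "m \<le> n" using mem sumn member_le_sum_list[of m "map fst n_as"] by force
      then show ?thesis using a0[OF mem] by (intro eq_matI) (auto simp: jordan_block_zero_pow)
    qed
    have "elements_mat (J ^\<^sub>m n) \<subseteq> {0}"
    proof -
      have "J ^\<^sub>m n = diag_block_mat (map (\<lambda>(m, a). jordan_block m a ^\<^sub>m n) n_as)"
        unfolding J_def by (rule jordan_matrix_pow)
      also have "\<dots> = diag_block_mat (map (\<lambda>(m, a). 0\<^sub>m m m) n_as)"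
        by (intro arg_cong[of _ _ diag_block_mat] map_cong refl) (auto simp: blk)
      finally have eq: "J ^\<^sub>m n = diag_block_mat (map (\<lambda>(m, a). 0\<^sub>m m m) n_as)" .
      have "elements_mat (J ^\<^sub>m n) \<subseteq> {0} \<union> \<Union> (set (map elements_mat (map (\<lambda>(m, a). (0\<^sub>m m m :: complex mat)) n_as)))"
        unfolding eq by (rule elements_diag_block_mat)
      also have "\<dots> \<subseteq> {0}" using elements_0_mat by auto
      finally show ?thesis .
    qed
    then have Jn: "J ^\<^sub>m n = 0\<^sub>m n n" using J
    proof (intro eq_matI)
      fix i j assume "elements_mat (J ^\<^sub>m n) \<subseteq> {0}" "i < dim_row (0\<^sub>m n n)" "j < dim_col (0\<^sub>m n n)"
      moreover have "(J ^\<^sub>m n) $$ (i,j) \<in> elements_mat (J ^\<^sub>m n)"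
        using J calculation by (intro elements_matI[of _ n n i j]) auto
      ultimately show "(J ^\<^sub>m n) $$ (i,j) = 0\<^sub>m n n $$ (i,j)" by auto
    qed auto
    have "cA ^\<^sub>m n = 0\<^sub>m n n" using pw[of n] PQ J unfolding J_def[symmetric] Jn by simp
    moreover have "map_mat complex_of_real (A ^\<^sub>m n) = cA ^\<^sub>m n"
      unfolding cA_def by (rule of_real_hom.mat_hom_pow[OF A])
    ultimately have "map_mat complex_of_real (A ^\<^sub>m n) = 0\<^sub>m n n" by simp
    then have "A ^\<^sub>m n = 0\<^sub>m n n" using A
      by (intro eq_matI) (auto simp: mat_eq_iff)
    then have "A = 0\<^sub>m n n" using sym_nilpotent_zero[OF A s n] by simp
    then show False using nz by simp
  qed
qed


lemma outer_carrier[simp]: "outer u \<in> carrier_mat (dim_vec u) (dim_vec u)"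
  unfolding outer_def by auto

lemma outer_dims[simp]: "dim_row (outer u) = dim_vec u" "dim_col (outer u) = dim_vec u"
  unfolding outer_def by auto

lemma outer_index[simp]: "i < dim_vec u \<Longrightarrow> j < dim_vec u \<Longrightarrow> outer u $$ (i,j) = u $ i * u $ j"
  unfolding outer_def by auto

lemma outer_transpose: "transpose_mat (outer u) = outer u"
  by (intro eq_matI) auto

lemma mult_vec_index_sum: "A \<in> carrier_mat n m \<Longrightarrow> v \<in> carrier_vec m \<Longrightarrow> i < n \<Longrightarrow> (A *\<^sub>v v) $ i = (\<Sum>k<m. A $$ (i,k) * v $ k)"
  by (auto simp: scalar_prod_def lessThan_atLeast0)

lemma outer_mult:
  assumes B: "B \<in> carrier_mat n m" and w: "w \<in> carrier_vec m"
  shows "B * outer w * transpose_mat B = outer (B *\<^sub>v w)"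
proof (rule eq_matI)
  fix i j assume i: "i < dim_row (outer (B *\<^sub>v w))" and j: "j < dim_col (outer (B *\<^sub>v w))"
  then have i: "i < n" and j: "j < n" using B by auto
  have "(B * outer w * transpose_mat B) $$ (i,j) = (\<Sum>k<m. (\<Sum>l<m. B $$ (i,l) * (w $ l * w $ k)) * B $$ (j,k))"
    using B w i j by (simp add: scalar_prod_def lessThan_atLeast0)
  also have "\<dots> = (\<Sum>l<m. B $$ (i,l) * w $ l) * (\<Sum>k<m. B $$ (j,k) * w $ k)"
  proof -
    have "\<And>k. (\<Sum>l<m. B $$ (i,l) * (w $ l * w $ k)) = (\<Sum>l<m. B $$ (i,l) * w $ l) * w $ k"
      by (simp add: sum_distrib_left mult_ac)
    then show ?thesis by (simp add: sum_distrib_left mult_ac)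
  qed
  also have "\<dots> = (B *\<^sub>v w) $ i * (B *\<^sub>v w) $ j"
    by (simp only: mult_vec_index_sum[OF B w i] mult_vec_index_sum[OF B w j])
  also have "\<dots> = outer (B *\<^sub>v w) $$ (i,j)"
    using B i j w by simp
  finally show "(B * outer w * transpose_mat B) $$ (i,j) = outer (B *\<^sub>v w) $$ (i,j)" .
qed (use B w in auto)

lemma mult_outer:
  assumes A: "A \<in> carrier_mat n n" and u: "u \<in> carrier_vec n" and ev: "A *\<^sub>v u = c \<cdot>\<^sub>v u"
  shows "A * outer u = c \<cdot>\<^sub>m outer u"
proof (rule eq_matI)
  fix i j assume i: "i < dim_row (c \<cdot>\<^sub>m outer u)" and j: "j < dim_col (c \<cdot>\<^sub>m outer u)"
  then have i: "i < n" and j: "j < n" using u by auto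
  have "(A * outer u) $$ (i,j) = (\<Sum>k<n. A $$ (i,k) * (u $ k * u $ j))"
    using A u i j by (simp add: scalar_prod_def lessThan_atLeast0)
  also have "\<dots> = (A *\<^sub>v u) $ i * u $ j"
    using A i u by (simp add: mult_vec_index_sum[OF A u i] sum_distrib_left mult_ac)
  also have "\<dots> = (c \<cdot>\<^sub>m outer u) $$ (i,j)" using ev i j u by simp
  finally show "(A * outer u) $$ (i,j) = (c \<cdot>\<^sub>m outer u) $$ (i,j)" .
qed (use A u in auto)

lemma outer_idem:
  assumes u: "u \<in> carrier_vec n" and nu: "u \<bullet> u = 1"
  shows "outer u * outer u = outer u"
proof (rule eq_matI)
  fix i j assume i: "i < dim_row (outer u)" and j: "j < dim_col (outer u)"
  then have i: "i < n" and j: "j < n" using u by auto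
  have "(outer u * outer u) $$ (i,j) = (\<Sum>k<n. (u $ i * u $ k) * (u $ k * u $ j))"
    using u i j by (simp add: scalar_prod_def lessThan_atLeast0)
  also have "\<dots> = u $ i * u $ j * (\<Sum>k<n. u $ k * u $ k)"
    by (simp add: sum_distrib_left mult_ac)
  also have "(\<Sum>k<n. u $ k * u $ k) = 1" using nu u by (simp add: scalar_prod_def lessThan_atLeast0)
  finally show "(outer u * outer u) $$ (i,j) = outer u $$ (i,j)" using i j u by simp
qed (use u in auto)


lemma rank_minus_outer:
  fixes A :: "real mat"
  assumes A: "A \<in> carrier_mat n n" and u: "u \<in> carrier_vec n" and nu: "u \<bullet> u = 1"
    and ev: "A *\<^sub>v u = \<rho> \<cdot>\<^sub>v u" and rho: "\<rho> \<noteq> 0" and al: "\<alpha> \<noteq> \<rho>"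
  shows "mat_rank (A - \<alpha> \<cdot>\<^sub>m outer u) = mat_rank A"
proof -
  define P where "P = outer u"
  have P: "P \<in> carrier_mat n n" using u unfolding P_def by auto
  have AP: "A * P = \<rho> \<cdot>\<^sub>m P" unfolding P_def by (rule mult_outer[OF A u ev])
  have PP: "P * P = P" unfolding P_def by (rule outer_idem[OF u nu])
  define \<beta> where "\<beta> = \<alpha> / \<rho>"
  have b1: "\<beta> \<noteq> 1" using al rho unfolding \<beta>_def by auto
  define \<gamma> where "\<gamma> = \<beta> / (1 - \<beta>)"
  have gb: "\<gamma> - \<beta> - \<beta> * \<gamma> = 0" using b1 unfolding \<gamma>_def by (simp add: field_simps)
  define M where "M = 1\<^sub>m n - \<beta> \<cdot>\<^sub>m P"
  define N where "N = 1\<^sub>m n + \<gamma> \<cdot>\<^sub>m P"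
  have M: "M \<in> carrier_mat n n" and N: "N \<in> carrier_mat n n" using P unfolding M_def N_def by auto
  have AM: "A * M = A - \<alpha> \<cdot>\<^sub>m P"
  proof -
    have "A * M = A * 1\<^sub>m n - A * (\<beta> \<cdot>\<^sub>m P)" unfolding M_def
      using A P by (intro mult_minus_distrib_mat[of _ n n]) auto
    also have "\<dots> = A - \<beta> \<cdot>\<^sub>m (A * P)" using A P by (simp add: mult_smult_distrib)
    also have "\<beta> \<cdot>\<^sub>m (A * P) = \<alpha> \<cdot>\<^sub>m P" unfolding AP using rho
      by (intro eq_matI) (auto simp: \<beta>_def)
    finally show ?thesis .
  qed
  have MN: "M * N = 1\<^sub>m n"
  proof -
    have "M * N = M * 1\<^sub>m n + M * (\<gamma> \<cdot>\<^sub>m P)" unfolding N_def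
      using M P by (intro mult_add_distrib_mat[of _ n n]) auto
    also have "\<dots> = M + \<gamma> \<cdot>\<^sub>m (M * P)" using M P by (simp add: mult_smult_distrib)
    also have "M * P = P - \<beta> \<cdot>\<^sub>m P"
    proof -
      have "M * P = 1\<^sub>m n * P - (\<beta> \<cdot>\<^sub>m P) * P" unfolding M_def
        using P by (intro minus_mult_distrib_mat[of _ n n]) auto
      also have "\<dots> = P - \<beta> \<cdot>\<^sub>m P" using P PP by (simp add: mult_smult_assoc_mat)
      finally show ?thesis .
    qed
    also have "M + \<gamma> \<cdot>\<^sub>m (P - \<beta> \<cdot>\<^sub>m P) = 1\<^sub>m n"
      unfolding M_def
    proof (rule eq_matI)
      fix i j assume "i < dim_row (1\<^sub>m n :: real mat)" "j < dim_col (1\<^sub>m n :: real mat)"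
      then show "(1\<^sub>m n - \<beta> \<cdot>\<^sub>m P + \<gamma> \<cdot>\<^sub>m (P - \<beta> \<cdot>\<^sub>m P)) $$ (i, j) = 1\<^sub>m n $$ (i, j)"
        using P gb by (simp add: algebra_simps) (metis gb distrib_right mult.assoc eq_diff_eq add.commute add_0)
    qed (use P in auto)
    finally show ?thesis .
  qed
  have bk: "(A - \<alpha> \<cdot>\<^sub>m P) * N = A"
  proof -
    have "(A - \<alpha> \<cdot>\<^sub>m P) * N = A * M * N" using AM by simp
    also have "\<dots> = A * (M * N)" using A M N by (simp add: assoc_mult_mat[of A n n M n N n])
    finally show ?thesis using MN A by simp
  qed
  have AP': "A - \<alpha> \<cdot>\<^sub>m P \<in> carrier_mat n n" using A P by auto
  have "vec_space.rank n (A - \<alpha> \<cdot>\<^sub>m P) \<le> vec_space.rank n A"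
    unfolding AM[symmetric] by (rule rank_mult_le[OF A M])
  moreover have "vec_space.rank n A \<le> vec_space.rank n (A - \<alpha> \<cdot>\<^sub>m P)"
    using rank_mult_le[OF AP' N] bk by simp
  ultimately show ?thesis unfolding mat_rank_def P_def using A u by simp
qed


lemma nonneg_mult:
  assumes X: "X \<in> carrier_mat a b" and Y: "Y \<in> carrier_mat b c"
    and nX: "nonneg_mat X" and nY: "nonneg_mat Y"
  shows "nonneg_mat (X * Y)"
  unfolding nonneg_mat_def
proof (intro allI impI)
  fix i j assume i: "i < dim_row (X * Y)" and j: "j < dim_col (X * Y)"
  have "(X * Y) $$ (i,j) = (\<Sum>k<b. X $$ (i,k) * Y $$ (k,j))"
    using X Y i j by (simp add: scalar_prod_def lessThan_atLeast0)
  also have "\<dots> \<ge> 0" using nX nY X Y i j unfolding nonneg_mat_def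
    by (intro sum_nonneg mult_nonneg_nonneg) auto
  finally show "(X * Y) $$ (i,j) \<ge> 0" .
qed

lemma nonneg_transpose: "nonneg_mat X \<Longrightarrow> nonneg_mat (transpose_mat X)"
  unfolding nonneg_mat_def by auto

lemma pos_min:
  fixes f :: "nat \<Rightarrow> nat \<Rightarrow> real"
  assumes "\<And>i j. i < a \<Longrightarrow> j < b \<Longrightarrow> f i j > 0"
  shows "\<exists>m>0. \<forall>i<a. \<forall>j<b. m \<le> f i j"
proof -
  define S where "S = insert 1 {f i j |i j. i < a \<and> j < b}"
  have fin: "finite S" unfolding S_def
  proof -
    have "{f i j |i j. i < a \<and> j < b} \<subseteq> (\<lambda>(i,j). f i j) ` ({..<a} \<times> {..<b})" by auto
    then show "finite (insert 1 {f i j |i j. i < a \<and> j < b})" by (meson finite_SigmaI finite_imageI finite_insert finite_lessThan finite_subset)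
  qed
  have ne: "S \<noteq> {}" unfolding S_def by auto
  have "Min S \<in> S" using Min_in[OF fin ne] .
  then have pos: "Min S > 0" using assms unfolding S_def by auto
  have "\<forall>i<a. \<forall>j<b. Min S \<le> f i j" using fin unfolding S_def
    by (auto intro!: Min_le)
  then show ?thesis using pos by blast
qed

lemma E_member:
  assumes A: "A' \<in> carrier_mat n n" and s: "transpose_mat A' = A'" and rk: "mat_rank A' = r"
    and B: "B' \<in> carrier_mat n r" and nB: "nonneg_mat B'" and C: "C' \<in> SNN r"
    and eq: "A' = B' * C' * transpose_mat B'"
  shows "A' \<in> E_set n"
proof -
  have nA: "nonneg_mat A'" unfolding eq
    using C B nB by (intro nonneg_mult nonneg_transpose[OF nB]) (auto simp: SNN_def intro: nonneg_mult)
  have snt: "snt_fact A' r" unfolding snt_fact_def using A B nB C eq by auto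
  have le: "st_plus A' \<le> r" unfolding st_plus_def by (rule Least_le[of "snt_fact A'", OF snt])
  have "snt_fact A' (st_plus A')" unfolding st_plus_def by (rule LeastI[of "snt_fact A'", OF snt])
  then obtain B2 C2 where B2: "B2 \<in> carrier_mat n (st_plus A')" and C2: "C2 \<in> SNN (st_plus A')"
    and eq2: "A' = B2 * C2 * transpose_mat B2" using A unfolding snt_fact_def by auto
  let ?k = "st_plus A'"
  have C2c: "C2 \<in> carrier_mat ?k ?k" using C2 unfolding SNN_def by auto
  have "A' = B2 * (C2 * transpose_mat B2)" unfolding eq2 using B2 C2c
    by (intro assoc_mult_mat) auto
  then have "vec_space.rank n A' \<le> vec_space.rank n B2"
    using rank_mult_le[OF B2, of "C2 * transpose_mat B2" n] B2 C2c by auto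
  also have "\<dots> \<le> ?k" using vec_space.rank_le_nc[OF B2] .
  finally have "r \<le> ?k" using rk A unfolding mat_rank_def by simp
  then have "mat_rank A' = st_plus A'" using le rk by simp
  then show ?thesis unfolding E_set_def SNN_def using A s nA by auto
qed


lemma sq_le_sum: 
  fixes w :: "real vec"
  assumes "i < m"
  shows "(w $ i)^2 \<le> (\<Sum>k<m. (w $ k)^2)"
  using assms by (intro member_le_sum) auto

lemma prod_le_sumsq:
  fixes w :: "real vec"
  assumes "i < m" "j < m"
  shows "\<bar>w $ i * w $ j\<bar> \<le> (\<Sum>k<m. (w $ k)^2)"
proof -
  have "\<bar>w $ i * w $ j\<bar> \<le> ((w $ i)^2 + (w $ j)^2) / 2"
    using sum_squares_bound[of "\<bar>w $ i\<bar>" "\<bar>w $ j\<bar>"]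
    by (simp add: abs_mult field_simps power2_eq_square)
  also have "\<dots> \<le> (\<Sum>k<m. (w $ k)^2)" using sq_le_sum[OF assms(1), of w] sq_le_sum[OF assms(2), of w] by simp
  finally show ?thesis .
qed

lemma caseC:
  assumes C: "C \<in> carrier_mat r r" and pC: "pos_mat C" and w: "w \<in> carrier_vec r"
  shows "\<exists>a0>0. \<forall>\<alpha>. 0 < \<alpha> \<and> \<alpha> \<le> a0 \<longrightarrow> nonneg_mat (C - \<alpha> \<cdot>\<^sub>m outer w)"
proof -
  obtain m where m: "m > 0" "\<forall>i<r. \<forall>j<r. m \<le> C $$ (i,j)"
    using pos_min[of r r "\<lambda>i j. C $$ (i,j)"] pC C unfolding pos_mat_def by auto
  define W where "W = 1 + (\<Sum>k<r. (w $ k)^2)"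
  have W: "W > 0" unfolding W_def by (smt (verit) sum_nonneg zero_le_power2)
  define a0 where "a0 = m / W"
  have a0: "a0 > 0" using m W unfolding a0_def by simp
  have "nonneg_mat (C - \<alpha> \<cdot>\<^sub>m outer w)" if al: "0 < \<alpha>" "\<alpha> \<le> a0" for \<alpha>
    unfolding nonneg_mat_def
  proof (intro allI impI)
    fix i j assume i: "i < dim_row (C - \<alpha> \<cdot>\<^sub>m outer w)" and j: "j < dim_col (C - \<alpha> \<cdot>\<^sub>m outer w)"
    then have i: "i < r" and j: "j < r" using C w by auto
    have "\<alpha> * (w $ i * w $ j) \<le> \<alpha> * W"
      using prod_le_sumsq[OF i j, of w] al unfolding W_def
      by (intro mult_left_mono) auto
    also have "\<dots> \<le> a0 * W" using al W by simp
    also have "\<dots> = m" unfolding a0_def using W by simp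
    also have "\<dots> \<le> C $$ (i,j)" using m i j by auto
    finally show "(C - \<alpha> \<cdot>\<^sub>m outer w) $$ (i,j) \<ge> 0" using C w i j by simp
  qed
  then show ?thesis using a0 by blast
qed


lemma caseB:
  fixes B C :: "real mat"
  assumes B: "B \<in> carrier_mat n r" and pB: "pos_mat B"
    and C: "C \<in> carrier_mat r r" and nC: "nonneg_mat C" and sC: "transpose_mat C = C"
    and tot: "(\<Sum>k<r. \<Sum>l<r. C $$ (k,l)) > 0" and w: "w \<in> carrier_vec r"
  shows "\<exists>a0>0. \<forall>\<alpha>. 0 < \<alpha> \<and> \<alpha> \<le> a0 \<longrightarrow> (\<exists>B' C'. B' \<in> carrier_mat n r \<and> nonneg_mat B' \<and> C' \<in> SNN r
            \<and> B' * C' * transpose_mat B' = B * (C - \<alpha> \<cdot>\<^sub>m outer w) * transpose_mat B)"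
proof -
  define totC where "totC = (\<Sum>k<r. \<Sum>l<r. C $$ (k,l))"
  have totC: "totC > 0" using tot unfolding totC_def .
  obtain bmin where bmin: "bmin > 0" "\<forall>i<n. \<forall>j<r. bmin \<le> B $$ (i,j)"
    using pos_min[of n r "\<lambda>i j. B $$ (i,j)"] pB B unfolding pos_mat_def by auto
  define bsum where "bsum = (\<Sum>i<n. \<Sum>k<r. B $$ (i,k))"
  have Bnn: "\<And>i k. i < n \<Longrightarrow> k < r \<Longrightarrow> B $$ (i,k) \<ge> 0" using bmin by (meson less_le_trans less_imp_le)
  have bsum0: "bsum \<ge> 0" unfolding bsum_def using Bnn by (intro sum_nonneg) auto
  have rowle: "(\<Sum>k<r. B $$ (i,k)) \<le> bsum" if i: "i < n" for i
    unfolding bsum_def using i Bnn by (intro member_le_sum[of i "{..<n}"] sum_nonneg) auto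
  define s where "s = min 1 (bmin / (bsum + 1))"
  have s0: "s > 0" and s1: "s \<le> 1" unfolding s_def using bmin bsum0 by auto
  have sb: "s * bsum \<le> bmin"
  proof -
    have "s * bsum \<le> bmin / (bsum + 1) * bsum" unfolding s_def using bsum0 by (intro mult_right_mono) auto
    also have "\<dots> \<le> bmin" using bmin bsum0 by (simp add: field_simps)
    finally show ?thesis .
  qed
  define t where "t = s / (1 + real r * s)"
  have dpos: "1 + real r * s \<ge> 1" using s0 by (smt (verit) mult_nonneg_nonneg of_nat_0_le_iff)
  have t0: "t \<ge> 0" unfolding t_def using s0 dpos by simp
  have rs0: "real r * s \<ge> 0" using s0 by simp
  have dp: "0 < 1 + real r * s" using rs0 by linarith
  have "s / (1 + real r * s) \<le> s / 1" apply (rule divide_left_mono) using rs0 apply linarith using s0 apply linarith using dp by (simp only: mult_1_right)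
  then have ts: "t \<le> s" unfolding t_def by simp
  have dnz: "1 + real r * s \<noteq> 0" using dp by linarith
  have tid: "s - t - s * (t * real r) = 0"
  proof -
    have "s - t - s * (t * real r) = (s * (1 + real r * s) - s - s * (s * real r)) / (1 + real r * s)"
      unfolding t_def using dnz by (simp add: field_simps)
    also have "\<dots> = 0" by (simp add: algebra_simps)
    finally show ?thesis .
  qed
  define E where "E = (mat r r (\<lambda>_. 1) :: real mat)"
  define S where "S = 1\<^sub>m r + s \<cdot>\<^sub>m E"
  define T where "T = 1\<^sub>m r - t \<cdot>\<^sub>m E"
  have E: "E \<in> carrier_mat r r" and S: "S \<in> carrier_mat r r" and T: "T \<in> carrier_mat r r"
    unfolding E_def S_def T_def by auto
  have EE: "E * E = real r \<cdot>\<^sub>m E" unfolding E_def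
    by (intro eq_matI) (auto simp: scalar_prod_def)
  have TS: "T * S = 1\<^sub>m r"
  proof -
    have "T * S = T * 1\<^sub>m r + T * (s \<cdot>\<^sub>m E)" unfolding S_def
      using T E by (intro mult_add_distrib_mat[of _ r r]) auto
    also have "\<dots> = T + s \<cdot>\<^sub>m (T * E)" using T E by (simp add: mult_smult_distrib)
    also have "T * E = E - t \<cdot>\<^sub>m (E * E)"
    proof -
      have "T * E = 1\<^sub>m r * E - (t \<cdot>\<^sub>m E) * E" unfolding T_def
        using E by (intro minus_mult_distrib_mat[of _ r r]) auto
      also have "\<dots> = E - t \<cdot>\<^sub>m (E * E)" using E by (simp add: mult_smult_assoc_mat)
      finally show ?thesis .
    qed
    also have "T + s \<cdot>\<^sub>m (E - t \<cdot>\<^sub>m (E * E)) = 1\<^sub>m r"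
      unfolding EE T_def
    proof (rule eq_matI)
      fix i j assume "i < dim_row (1\<^sub>m r :: real mat)" "j < dim_col (1\<^sub>m r :: real mat)"
      then have ij: "i < r" "j < r" by auto
      have "(1\<^sub>m r - t \<cdot>\<^sub>m E + s \<cdot>\<^sub>m (E - t \<cdot>\<^sub>m (real r \<cdot>\<^sub>m E))) $$ (i, j)
          = 1\<^sub>m r $$ (i,j) + (s - t - s * (t * real r))"
        using ij E unfolding E_def by (simp add: algebra_simps)
      then show "(1\<^sub>m r - t \<cdot>\<^sub>m E + s \<cdot>\<^sub>m (E - t \<cdot>\<^sub>m (real r \<cdot>\<^sub>m E))) $$ (i, j) = 1\<^sub>m r $$ (i, j)"
        using tid by simp
    qed (use E in auto)
    finally show ?thesis .
  qed
  have Et: "transpose_mat E = E" unfolding E_def by (intro eq_matI) auto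
  have St: "transpose_mat S = S" unfolding S_def E_def by (intro eq_matI) auto
  have Tt: "transpose_mat T = T" unfolding T_def E_def by (intro eq_matI) auto
  have ST: "S * T = 1\<^sub>m r"
  proof -
    have "transpose_mat (T * S) = transpose_mat S * transpose_mat T"
      using T S by (intro transpose_mult) auto
    then show ?thesis using TS St Tt by simp
  qed
  have TSX: "T * (S * X) = X" if X: "X \<in> carrier_mat r c" for X c
    using assoc_mult_mat[OF T S X] TS X by simp
  have STX: "S * (T * X) = X" if X: "X \<in> carrier_mat r c" for X c
    using assoc_mult_mat[OF S T X] ST X by simp
  have Sge: "S $$ (i,j) \<ge> s" "S $$ (i,j) \<le> 2" if "i < r" "j < r" for i j
    using that s1 unfolding S_def E_def by auto
  define a0 where "a0 = s^2 * totC / (4 * (\<Sum>k<r. \<bar>w $ k\<bar>)^2 + 1)"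
  have den: "4 * (\<Sum>k<r. \<bar>w $ k\<bar>)^2 + 1 > 0"
    using zero_le_power2[of "\<Sum>k<r. \<bar>w $ k\<bar>"] by linarith
  have a0: "a0 > 0" unfolding a0_def using s0 totC den by simp
  have main: "\<exists>B' C'. B' \<in> carrier_mat n r \<and> nonneg_mat B' \<and> C' \<in> SNN r
            \<and> B' * C' * transpose_mat B' = B * (C - \<alpha> \<cdot>\<^sub>m outer w) * transpose_mat B"
    if al: "0 < \<alpha>" "\<alpha> \<le> a0" for \<alpha>
  proof -
    define Ca where "Ca = C - \<alpha> \<cdot>\<^sub>m outer w"
    have Wc: "outer w \<in> carrier_mat r r" using w by auto
    have Ca: "Ca \<in> carrier_mat r r" unfolding Ca_def using C w by auto
    have Cat: "transpose_mat Ca = Ca" unfolding Ca_def using C w sC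
      by (intro eq_matI) (auto simp: mult.commute, metis index_transpose_mat(1) carrier_matD)
    define B' where "B' = B * T"
    define C' where "C' = S * Ca * S"
    have B': "B' \<in> carrier_mat n r" unfolding B'_def using B T by auto
    have C': "C' \<in> carrier_mat r r" unfolding C'_def using S Ca by auto
    have eq: "B' * C' * transpose_mat B' = B * Ca * transpose_mat B"
    proof -
      have tB': "transpose_mat B' = T * transpose_mat B" unfolding B'_def
        using transpose_mult[OF B T] Tt by simp
      have BT: "transpose_mat B \<in> carrier_mat r n" using B by auto
      have X: "S * Ca * S \<in> carrier_mat r r" using S Ca by auto
      have Y: "T * transpose_mat B \<in> carrier_mat r n" using T BT by auto
      have TX: "T * (S * Ca * S) = Ca * S"
      proof -
        have "T * (S * Ca * S) = T * (S * Ca) * S" using T S Ca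
          by (intro assoc_mult_mat[symmetric]) auto
        then show ?thesis using TSX[OF Ca] by simp
      qed
      have "B' * C' * transpose_mat B' = B * T * (S * Ca * S) * (T * transpose_mat B)"
        unfolding tB' unfolding B'_def C'_def ..
      also have "B * T * (S * Ca * S) = B * (T * (S * Ca * S))"
        using B T X by (intro assoc_mult_mat) auto
      also have "\<dots> = B * (Ca * S)" unfolding TX ..
      also have "B * (Ca * S) * (T * transpose_mat B) = B * ((Ca * S) * (T * transpose_mat B))"
        using B Ca S Y by (intro assoc_mult_mat) auto
      also have "(Ca * S) * (T * transpose_mat B) = Ca * (S * (T * transpose_mat B))"
        using Ca S Y by (intro assoc_mult_mat) auto
      also have "\<dots> = Ca * transpose_mat B" using STX[OF BT] by simp
      also have "B * (Ca * transpose_mat B) = B * Ca * transpose_mat B"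
        using B Ca BT by (intro assoc_mult_mat[symmetric]) auto
      finally show ?thesis .
    qed
    have nB': "nonneg_mat B'" unfolding nonneg_mat_def
    proof (intro allI impI)
      fix i j assume "i < dim_row B'" "j < dim_col B'"
      then have i: "i < n" and j: "j < r" using B' by auto
      have "B' = B * 1\<^sub>m r - B * (t \<cdot>\<^sub>m E)" unfolding B'_def T_def
        using B E by (intro mult_minus_distrib_mat[of _ n r]) auto
      also have "\<dots> = B - t \<cdot>\<^sub>m (B * E)" using B E by (simp add: mult_smult_distrib)
      finally have "B' $$ (i,j) = B $$ (i,j) - t * (B * E) $$ (i,j)" using i j B E by simp
      also have "(B * E) $$ (i,j) = (\<Sum>k<r. B $$ (i,k))" using i j B E unfolding E_def
        by (simp add: scalar_prod_def lessThan_atLeast0)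
      finally have eqB: "B' $$ (i,j) = B $$ (i,j) - t * (\<Sum>k<r. B $$ (i,k))" .
      have "t * (\<Sum>k<r. B $$ (i,k)) \<le> s * bsum"
        using rowle[OF i] t0 ts bsum0 by (meson mult_mono order_trans sum_nonneg Bnn i lessThan_iff)
      also have "\<dots> \<le> B $$ (i,j)" using sb bmin i j by fastforce
      finally show "B' $$ (i,j) \<ge> 0" using eqB by simp
    qed
    have C'sym: "transpose_mat C' = C'"
    proof -
      have "transpose_mat C' = transpose_mat S * transpose_mat (S * Ca)"
        unfolding C'_def using S Ca by (intro transpose_mult) auto
      also have "transpose_mat (S * Ca) = transpose_mat Ca * transpose_mat S"
        using S Ca by (intro transpose_mult) auto
      finally show ?thesis unfolding C'_def using St Cat S Ca
        by (simp add: assoc_mult_mat[of _ r r _ r])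
    qed
    have nC': "nonneg_mat C'" unfolding nonneg_mat_def
    proof (intro allI impI)
      fix i j assume "i < dim_row C'" "j < dim_col C'"
      then have i: "i < r" and j: "j < r" using C' by auto
      have "C' = S * C * S - \<alpha> \<cdot>\<^sub>m (S * outer w * transpose_mat S)"
      proof -
        have "S * Ca = S * C - S * (\<alpha> \<cdot>\<^sub>m outer w)" unfolding Ca_def
          using S C w by (intro mult_minus_distrib_mat[of _ r r]) auto
        also have "\<dots> = S * C - \<alpha> \<cdot>\<^sub>m (S * outer w)" using mult_smult_distrib[OF S Wc] by simp
        finally have "S * Ca * S = (S * C - \<alpha> \<cdot>\<^sub>m (S * outer w)) * S" by simp
        also have "\<dots> = S * C * S - (\<alpha> \<cdot>\<^sub>m (S * outer w)) * S"
          using S C w by (intro minus_mult_distrib_mat[of _ r r]) auto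
        also have "\<dots> = S * C * S - \<alpha> \<cdot>\<^sub>m (S * outer w * S)"
          using mult_smult_assoc_mat[of "S * outer w" r r S r \<alpha>] S Wc by simp
        finally show ?thesis unfolding C'_def using St by simp
      qed
      also have "S * outer w * transpose_mat S = outer (S *\<^sub>v w)" by (rule outer_mult[OF S w])
      finally have "C' $$ (i,j) = (S * C * S) $$ (i,j) - \<alpha> * ((S *\<^sub>v w) $ i * (S *\<^sub>v w) $ j)"
        using i j S C w by simp
      moreover have "(S * C * S) $$ (i,j) \<ge> s^2 * totC"
      proof -
        have "(S * C * S) $$ (i,j) = (\<Sum>k<r. S $$ (i,k) * (\<Sum>l<r. C $$ (k,l) * S $$ (l,j)))"
          using S C i j by (simp add: scalar_prod_def lessThan_atLeast0)
        also have "\<dots> \<ge> (\<Sum>k<r. s * (\<Sum>l<r. C $$ (k,l) * s))"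
        proof (rule sum_mono, rule mult_mono)
          fix k assume k: "k \<in> {..<r}"
          show "(\<Sum>l<r. C $$ (k,l) * s) \<le> (\<Sum>l<r. C $$ (k,l) * S $$ (l,j))"
            using Sge j k nC C unfolding nonneg_mat_def by (intro sum_mono mult_left_mono) auto
          show "s \<le> S $$ (i,k)" using Sge k i by auto
          show "0 \<le> S $$ (i,k)" using Sge k i s0 by (meson less_le_trans less_imp_le lessThan_iff)
          show "0 \<le> (\<Sum>l<r. C $$ (k,l) * s)"
            using k nC C s0 unfolding nonneg_mat_def
            by (intro sum_nonneg mult_nonneg_nonneg) auto
        qed
        also have "(\<Sum>k<r. s * (\<Sum>l<r. C $$ (k,l) * s)) = s^2 * totC"
          unfolding totC_def by (simp add: sum_distrib_left sum_distrib_right power2_eq_square mult_ac)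
        finally show ?thesis .
      qed
      moreover have "\<alpha> * ((S *\<^sub>v w) $ i * (S *\<^sub>v w) $ j) \<le> s^2 * totC"
      proof -
        define Wa where "Wa = (\<Sum>k<r. \<bar>w $ k\<bar>)"
        have Wa: "Wa \<ge> 0" unfolding Wa_def by (simp add: sum_nonneg)
        have bnd: "\<bar>(S *\<^sub>v w) $ x\<bar> \<le> 2 * Wa" if x: "x < r" for x
        proof -
          have "\<bar>(S *\<^sub>v w) $ x\<bar> = \<bar>\<Sum>k<r. S $$ (x,k) * w $ k\<bar>"
            using mult_vec_index_sum[OF S w x] by simp
          also have "\<dots> \<le> (\<Sum>k<r. \<bar>S $$ (x,k) * w $ k\<bar>)" by (rule sum_abs)
          also have "\<dots> \<le> (\<Sum>k<r. 2 * \<bar>w $ k\<bar>)"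
          proof (intro sum_mono)
            fix k assume "k \<in> {..<r}"
            then have "s \<le> S $$ (x,k)" "S $$ (x,k) \<le> 2" using Sge x by auto
            then show "\<bar>S $$ (x,k) * w $ k\<bar> \<le> 2 * \<bar>w $ k\<bar>" using s0
              by (simp add: abs_mult mult_right_mono)
          qed
          finally show ?thesis unfolding Wa_def by (simp add: sum_distrib_left)
        qed
        have "(S *\<^sub>v w) $ i * (S *\<^sub>v w) $ j \<le> \<bar>(S *\<^sub>v w) $ i\<bar> * \<bar>(S *\<^sub>v w) $ j\<bar>"
          by (metis abs_ge_self abs_mult)
        also have "\<dots> \<le> (2 * Wa) * (2 * Wa)" using bnd[OF i] bnd[OF j]
          by (intro mult_mono) auto
        also have "\<dots> \<le> 4 * Wa^2 + 1" by (simp add: power2_eq_square)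
        finally have pr: "(S *\<^sub>v w) $ i * (S *\<^sub>v w) $ j \<le> 4 * Wa^2 + 1" .
        have "\<alpha> * ((S *\<^sub>v w) $ i * (S *\<^sub>v w) $ j) \<le> a0 * (4 * Wa^2 + 1)"
        proof (cases "(S *\<^sub>v w) $ i * (S *\<^sub>v w) $ j \<ge> 0")
          case True
          then show ?thesis using al pr Wa by (intro mult_mono) (auto simp: power2_eq_square)
        next
          case False
          then have "\<alpha> * ((S *\<^sub>v w) $ i * (S *\<^sub>v w) $ j) \<le> 0" using al
            by (simp add: mult_nonneg_nonpos)
          also have "0 \<le> a0 * (4 * Wa^2 + 1)" using a0 Wa by simp
          finally show ?thesis .
        qed
        also have "\<dots> = s^2 * totC" unfolding a0_def Wa_def using den by simp
        finally show ?thesis .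
      qed
      ultimately show "C' $$ (i,j) \<ge> 0" by simp
    qed
    have "C' \<in> SNN r" unfolding SNN_def using C' C'sym nC' by auto
    then show ?thesis using B' nB' eq unfolding Ca_def by blast
  qed
  show ?thesis using a0 main by blast
qed


theorem mainTheorem12:
  fixes n r :: nat and A B C :: "real mat"
  assumes "A \<in> SNN n"
    and "mat_rank A = r" and "st_plus A = r"
    and "r > 0"
    and "B \<in> carrier_mat n r" and "nonneg_mat B"
    and "C \<in> carrier_mat r r" and "nonneg_mat C" and "transpose_mat C = C"
    and "A = B * C * transpose_mat B"
    and "pos_mat B \<or> pos_mat C"
  shows "A \<notin> bdry_E n"
proof
  note SA = assms(1) and rkA = assms(2) and r0 = assms(4) and B = assms(5) and nB = assms(6)
    and C = assms(7) and nC = assms(8) and sC = assms(9) and Aeq = assms(10) and pos = assms(11)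
  assume "A \<in> bdry_E n"
  then obtain u where pu: "perron_vec A u"
    and no: "\<And>\<alpha>. \<alpha> > 0 \<Longrightarrow> A - \<alpha> \<cdot>\<^sub>m outer u \<notin> E_set n"
    unfolding bdry_E_def by auto
  have Ac: "A \<in> carrier_mat n n" and At: "transpose_mat A = A" using SA unfolding SNN_def by auto
  have u: "u \<in> carrier_vec n" and nu: "u \<bullet> u = 1" and ev: "A *\<^sub>v u = rho A \<cdot>\<^sub>v u"
    using pu Ac unfolding perron_vec_def by auto
  have Anz: "A \<noteq> 0\<^sub>m n n"
  proof
    assume "A = 0\<^sub>m n n"
    then have "mat_rank A = 0" unfolding mat_rank_def using vec_space.rank_0I[of n n] by simp
    then show False using rkA r0 by simp
  qed
  define \<rho> where "\<rho> = rho A"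
  have rho: "\<rho> > 0" unfolding \<rho>_def by (rule rho_pos[OF Ac At Anz])
  have BT: "transpose_mat B \<in> carrier_mat r n" using B by auto
  define w where "w = (1 / \<rho>) \<cdot>\<^sub>v (C *\<^sub>v (transpose_mat B *\<^sub>v u))"
  have w: "w \<in> carrier_vec r" unfolding w_def using C BT u by auto
  have Bw: "B *\<^sub>v w = u"
  proof -
    have "B *\<^sub>v w = (1 / \<rho>) \<cdot>\<^sub>v (B *\<^sub>v (C *\<^sub>v (transpose_mat B *\<^sub>v u)))"
      unfolding w_def using B C BT u by (intro mult_mat_vec) auto
    also have "B *\<^sub>v (C *\<^sub>v (transpose_mat B *\<^sub>v u)) = A *\<^sub>v u"
    proof -
      have "A *\<^sub>v u = (B * C) *\<^sub>v (transpose_mat B *\<^sub>v u)"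
        unfolding Aeq by (rule assoc_mult_mat_vec[of _ n r _ n]) (use B C BT u in auto)
      also have "\<dots> = B *\<^sub>v (C *\<^sub>v (transpose_mat B *\<^sub>v u))"
        by (rule assoc_mult_mat_vec[of _ n r _ r]) (use B C BT u in auto)
      finally show ?thesis by simp
    qed
    also have "\<dots> = \<rho> \<cdot>\<^sub>v u" using ev unfolding \<rho>_def .
    finally show ?thesis using rho by (auto simp: smult_smult_assoc)
  qed
  have Wc: "outer w \<in> carrier_mat r r" using w by auto
  have ou: "outer u = B * outer w * transpose_mat B" using outer_mult[OF B w] Bw by simp
  have decomp: "A - \<alpha> \<cdot>\<^sub>m outer u = B * (C - \<alpha> \<cdot>\<^sub>m outer w) * transpose_mat B" for \<alpha>
  proof -
    have "B * (C - \<alpha> \<cdot>\<^sub>m outer w) = B * C - B * (\<alpha> \<cdot>\<^sub>m outer w)"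
      using B C Wc by (intro mult_minus_distrib_mat[of _ n r]) auto
    also have "\<dots> = B * C - \<alpha> \<cdot>\<^sub>m (B * outer w)" using mult_smult_distrib[OF B Wc] by simp
    finally have "B * (C - \<alpha> \<cdot>\<^sub>m outer w) * transpose_mat B
        = (B * C - \<alpha> \<cdot>\<^sub>m (B * outer w)) * transpose_mat B" by simp
    also have "\<dots> = B * C * transpose_mat B - (\<alpha> \<cdot>\<^sub>m (B * outer w)) * transpose_mat B"
      using B C Wc BT by (intro minus_mult_distrib_mat[of _ n r]) auto
    also have "\<dots> = B * C * transpose_mat B - \<alpha> \<cdot>\<^sub>m (B * outer w * transpose_mat B)"
      using mult_smult_assoc_mat[of "B * outer w" n r "transpose_mat B" n \<alpha>] B Wc BT by simp
    finally show ?thesis unfolding ou Aeq by simp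
  qed
  have key: "A - \<alpha> \<cdot>\<^sub>m outer u \<in> E_set n"
    if al: "0 < \<alpha>" "\<alpha> < \<rho>" and ex: "\<exists>B' C'. B' \<in> carrier_mat n r \<and> nonneg_mat B' \<and> C' \<in> SNN r
            \<and> B' * C' * transpose_mat B' = B * (C - \<alpha> \<cdot>\<^sub>m outer w) * transpose_mat B" for \<alpha>
  proof -
    from ex obtain B' C' where B': "B' \<in> carrier_mat n r" "nonneg_mat B'" "C' \<in> SNN r"
      and eq: "B' * C' * transpose_mat B' = B * (C - \<alpha> \<cdot>\<^sub>m outer w) * transpose_mat B" by blast
    have carr: "A - \<alpha> \<cdot>\<^sub>m outer u \<in> carrier_mat n n" using Ac u by auto
    have sym: "transpose_mat (A - \<alpha> \<cdot>\<^sub>m outer u) = A - \<alpha> \<cdot>\<^sub>m outer u"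
      using Ac u At by (intro eq_matI) (auto simp: mult.commute, metis index_transpose_mat(1) carrier_matD)
    have rk: "mat_rank (A - \<alpha> \<cdot>\<^sub>m outer u) = r"
      using rank_minus_outer[OF Ac u nu ev] rho al rkA unfolding \<rho>_def by auto
    show ?thesis
      by (rule E_member[OF carr sym rk B'(1) B'(2) B'(3)]) (use eq decomp in simp)
  qed
  obtain a0 where a0: "a0 > 0" and ha0: "\<And>\<alpha>. 0 < \<alpha> \<Longrightarrow> \<alpha> \<le> a0 \<Longrightarrow> (\<exists>B' C'. B' \<in> carrier_mat n r \<and> nonneg_mat B' \<and> C' \<in> SNN r
            \<and> B' * C' * transpose_mat B' = B * (C - \<alpha> \<cdot>\<^sub>m outer w) * transpose_mat B)"
  proof (cases "pos_mat C")
    case True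
    from caseC[OF C True w] obtain a0 where a0: "a0 > 0"
      and h: "\<And>\<alpha>. 0 < \<alpha> \<and> \<alpha> \<le> a0 \<Longrightarrow> nonneg_mat (C - \<alpha> \<cdot>\<^sub>m outer w)" by blast
    show ?thesis
    proof (rule that[OF a0])
      fix \<alpha> assume "0 < \<alpha>" "\<alpha> \<le> a0"
      then have nn: "nonneg_mat (C - \<alpha> \<cdot>\<^sub>m outer w)" using h by blast
      have sy: "transpose_mat (C - \<alpha> \<cdot>\<^sub>m outer w) = C - \<alpha> \<cdot>\<^sub>m outer w"
        using C w sC by (intro eq_matI) (auto simp: mult.commute, metis index_transpose_mat(1) carrier_matD)
      have "C - \<alpha> \<cdot>\<^sub>m outer w \<in> SNN r" unfolding SNN_def using C w nn sy by auto
      then show "\<exists>B' C'. B' \<in> carrier_mat n r \<and> nonneg_mat B' \<and> C' \<in> SNN r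
            \<and> B' * C' * transpose_mat B' = B * (C - \<alpha> \<cdot>\<^sub>m outer w) * transpose_mat B"
        using B nB by blast
    qed
  next
    case False
    then have pB: "pos_mat B" using pos by simp
    have tot: "(\<Sum>k<r. \<Sum>l<r. C $$ (k,l)) > 0"
    proof (rule ccontr)
      assume "\<not> (\<Sum>k<r. \<Sum>l<r. C $$ (k,l)) > 0"
      then have le: "(\<Sum>k<r. \<Sum>l<r. C $$ (k,l)) \<le> 0" by simp
      have nn: "\<And>k l. k < r \<Longrightarrow> l < r \<Longrightarrow> C $$ (k,l) \<ge> 0" using nC C unfolding nonneg_mat_def by auto
      have "(\<Sum>k<r. \<Sum>l<r. C $$ (k,l)) = 0"
        using le nn by (smt (verit) lessThan_iff sum_nonneg)
      then have "\<forall>k\<in>{..<r}. (\<Sum>l<r. C $$ (k,l)) = 0"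
        using nn by (subst sum_nonneg_eq_0_iff[symmetric]) (auto intro: sum_nonneg)
      have "\<forall>k<r. \<forall>l<r. C $$ (k,l) = 0"
      proof (intro allI impI)
        fix k l assume k: "k < r" and l: "l < r"
        have "(\<Sum>l<r. C $$ (k,l)) = 0" using \<open>\<forall>k\<in>{..<r}. (\<Sum>l<r. C $$ (k,l)) = 0\<close> k by auto
        then have "\<forall>l\<in>{..<r}. C $$ (k,l) = 0" using nn k by (subst sum_nonneg_eq_0_iff[symmetric]) auto
        then show "C $$ (k,l) = 0" using l by auto
      qed
      then have "C = 0\<^sub>m r r" using C by (intro eq_matI) auto
      then have "A = 0\<^sub>m n n" unfolding Aeq using B BT by simp
      then show False using Anz by simp
    qed
    from caseB[OF B pB C nC sC tot w] show ?thesis using that by blast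
  qed
  define \<alpha> where "\<alpha> = min a0 (\<rho> / 2)"
  have al: "0 < \<alpha>" "\<alpha> < \<rho>" "\<alpha> \<le> a0" unfolding \<alpha>_def using a0 rho by auto
  have "A - \<alpha> \<cdot>\<^sub>m outer u \<in> E_set n" using key[OF al(1,2) ha0[OF al(1,3)]] .
  then show False using no[OF al(1)] by simp
qed


end
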